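(* Let $q$ be a prime power and let $n_1,n_2$ be coprime odd positive integers, each coprime to $q$. If every irreducible monic factor of $x^{n_1}-1$ in $\mathbb{F}_{q^2}[x]$ is SCRIM and $x-1$ is the only SCRIM factor of $x^{n_2}-1$ in $\mathbb{F}_{q^2}[x]$, then $|\Omega_{q^2,n_1n_2}|=|\Omega_{q^2,n_1}|$.
   Context: $\mathbb{F}_{q^2}$ is the finite field with $q^2$ elements. For $\alpha\in\mathbb{F}_{q^2}$ put $\bar\alpha=\alpha^q$, and for $f(x)=\sum_i f_ix^i$ put $\overline{f(x)}=\sum_i \bar f_i x^i$. For $f(x)$ with $f(0)\neq 0$, $f^*(x)=x^{\deg f}f(0)^{-1}f(1/x)$ and $f^\dagger(x)=\overline{f^*(x)}$. A polynomial is SCRIM if it is monic, irreducible over $\mathbb{F}_{q^2}$, has nonzero constant term, and satisfies $f=f^\dagger$. $\Omega_{q^2,n}$ denotes the set of SCRIM polynomials in $\mathbb{F}_{q^2}[x]$ dividing $x^n-1$. *)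

theory Defs
  imports "HOL-Computational_Algebra.Computational_Algebra"
begin

text \<open>Conjugation on F_{q^2}: alpha bar = alpha^q, extended coefficientwise to polynomials.\<close>
definition poly_conj :: "nat \<Rightarrow> 'a::field poly \<Rightarrow> 'a poly" where
  "poly_conj q f = map_poly (\<lambda>a. a ^ q) f"

text \<open>Reciprocal f^*(x) = x^(deg f) f(0)^(-1) f(1/x); note x^(deg f) f(1/x) = reflect_poly f.\<close>
definition recip_poly :: "'a::field poly \<Rightarrow> 'a poly" where
  "recip_poly f = smult (inverse (coeff f 0)) (reflect_poly f)"

definition dagger :: "nat \<Rightarrow> 'a::field poly \<Rightarrow> 'a poly" where
  "dagger q f = poly_conj q (recip_poly f)"

definition scrim :: "nat \<Rightarrow> 'a::field poly \<Rightarrow> bool" where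
  "scrim q f \<longleftrightarrow> lead_coeff f = 1 \<and> irreducible f \<and> coeff f 0 \<noteq> 0 \<and> f = dagger q f"

definition Omega :: "nat \<Rightarrow> nat \<Rightarrow> 'a::field poly set" where
  "Omega q n = {f. scrim q f \<and> f dvd (monom 1 n - 1)}"

end

theory Submission imports Defs "HOL-Algebra.Algebraic_Closure_Type" "HOL-Number_Theory.Residues"
begin

hide_const (open) up_ring.monom Module.module.smult Polynomials.degree Polynomials.lead_coeff Divisibility.irreducible Divisibility.prime up_ring.coeff

abbreviation M :: "'a::field poly \<Rightarrow> 'a alg_closure poly" where
  "M p \<equiv> map_poly to_ac p"

lemma M_add: "M (p + q) = M p + M q"
  by (intro poly_eqI) (simp add: coeff_map_poly)
lemma M_diff: "M (p - q) = M p - M q"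
  by (intro poly_eqI) (simp add: coeff_map_poly)
lemma M_mult: "M (p * q) = M p * M q"
  by (intro poly_eqI) (simp add: coeff_map_poly coeff_mult to_ac_sum)
lemma M_smult: "M (smult c p) = smult (to_ac c) (M p)"
  by (intro poly_eqI) (simp add: coeff_map_poly)
lemma M_monom: "M (monom c n) = monom (to_ac c) n"
  by (simp add: map_poly_monom)
lemma M_1: "M 1 = 1" by simp
lemma M_const: "M [:c:] = [:to_ac c:]"
  by (simp add: map_poly_pCons)
lemma degree_M: "degree (M p) = degree p"
  by (simp add: degree_map_poly)
lemma M_pcompose: "M (pcompose p r) = pcompose (M p) (M r)"
  by (induction p) (simp_all add: pcompose_pCons map_poly_pCons M_add M_mult M_const)
lemma M_prod_mset: "M (prod_mset A) = prod_mset (image_mset M A)"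
  by (induction A) (simp_all add: M_mult)

lemma M_reflect: "M (reflect_poly p) = reflect_poly (M p)"
  by (intro poly_eqI) (simp add: coeff_map_poly coeff_reflect_poly degree_M)

lemma NOCOMMON:
  fixes f p :: "'a::field poly"
  assumes irr: "irreducible f" and fy: "poly (M f) y = 0"
  shows "p \<noteq> 0 \<Longrightarrow> degree p < degree f \<Longrightarrow> poly (M p) y \<noteq> 0"
proof (induction "degree p" arbitrary: p rule: less_induct)
  case less
  show ?case
  proof
    assume py: "poly (M p) y = 0"
    show False
    proof (cases "degree p = 0")
      case True
      then obtain c where "p = [:c:]" by (metis degree_eq_zeroE)
      then show False using py less.prems by (simp add: M_const)
    next
      case False
      define r where "r = f mod p"
      have fe: "f = (f div p) * p + r" unfolding r_def by simp
      have "poly (M r) y = 0"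
        using fy py by (metis fe M_add M_mult poly_add poly_mult add_0 mult_zero_right)
      show False
      proof (cases "r = 0")
        case False
        have "degree r < degree p" unfolding r_def using False less.prems
          by (metis degree_mod_less r_def)
        then show False using less.hyps[of r] False \<open>poly (M r) y = 0\<close> less.prems by auto
      next
        case True
        then have "f = (f div p) * p" using fe by simp
        moreover have "\<not> is_unit p" using \<open>degree p \<noteq> 0\<close>
          by (simp add: is_unit_iff_degree less.prems(1))
        moreover have "\<not> is_unit (f div p)"
        proof
          assume "is_unit (f div p)"
          then have "degree (f div p) = 0" by (metis is_unit_iff_degree not_is_unit_0)
          then have "degree f = degree p"
            using \<open>f = (f div p) * p\<close> less.prems
            by (metis add_0 degree_mult_eq irreducible_not_unit irr mult_eq_0_iff not_irreducible_zero)
          then show False using less.prems by simp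
        qed
        ultimately show False using irr by (metis Factorial_Ring.irreducibleD)
      qed
    qed
  qed
qed

lemma MIN:
  fixes f h :: "'a::field poly"
  assumes irr: "irreducible f" and fy: "poly (M f) y = 0" and hy: "poly (M h) y = 0"
  shows "f dvd h"
proof -
  define r where "r = h mod f"
  have he: "h = (h div f) * f + r" unfolding r_def by simp
  have ry: "poly (M r) y = 0"
    using fy hy by (metis he M_add M_mult poly_add poly_mult add_0 mult_zero_right)
  have f0: "f \<noteq> 0" using irr by auto
  have "r = 0"
  proof (rule ccontr)
    assume "r \<noteq> 0"
    moreover have "degree r < degree f"
      using f0 \<open>r \<noteq> 0\<close> irr unfolding r_def
      by (metis degree_mod_less is_unit_iff_degree irreducible_not_unit neq0_conv r_def)
    ultimately show False using NOCOMMON[OF irr fy] ry by blast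
  qed
  then show ?thesis unfolding r_def by (simp add: mod_eq_0_iff_dvd)
qed

lemma FROB:
  fixes g :: "'a::field poly"
  assumes cp: "prime CHAR('a)" and qk: "q = CHAR('a)^k"
  shows "poly (M (poly_conj q g)) (y^q) = (poly (M g) y)^q"
proof -
  have q0: "q > 0" using cp qk by (simp add: prime_gt_0_nat)
  have deg: "degree (poly_conj q g) = degree g"
    unfolding poly_conj_def using q0 by (simp add: degree_map_poly)
  have cf: "coeff (poly_conj q g) i = (coeff g i)^q" for i
    unfolding poly_conj_def using q0 by (simp add: coeff_map_poly)
  have cpL: "prime CHAR('a alg_closure)" using cp by simp
  have "poly (M (poly_conj q g)) (y^q) = (\<Sum>i\<le>degree g. to_ac (coeff g i ^ q) * (y^q)^i)"
    by (simp add: poly_altdef degree_M deg coeff_map_poly cf)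
  also have "\<dots> = (\<Sum>i\<le>degree g. (to_ac (coeff g i) * y^i)^q)"
    by (simp add: power_mult_distrib flip: power_mult) (simp add: mult.commute)
  also have "\<dots> = (\<Sum>i\<le>degree g. to_ac (coeff g i) * y^i)^q"
    by (rule sym, rule freshmans_dream_sum'[OF cpL]) (simp add: qk)
  also have "\<dots> = (poly (M g) y)^q"
    by (simp add: poly_altdef degree_M coeff_map_poly)
  finally show ?thesis .
qed

lemma DAG:
  fixes h :: "'a::field poly"
  assumes cp: "prime CHAR('a)" and qk: "q = CHAR('a)^k"
    and h0: "coeff h 0 \<noteq> 0" and y0: "y \<noteq> 0" and hy: "poly (M h) y = 0"
  shows "poly (M (dagger q h)) ((inverse y)^q) = 0"
proof -
  have q0: "q > 0" using cp qk by (simp add: prime_gt_0_nat)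
  have "poly (M (dagger q h)) ((inverse y)^q) = (poly (M (recip_poly h)) (inverse y))^q"
    unfolding dagger_def by (rule FROB[OF cp qk])
  also have "poly (M (recip_poly h)) (inverse y) = 0"
    unfolding recip_poly_def M_smult M_reflect
    using y0 hy by (simp add: poly_reflect_poly_nz)
  finally show ?thesis using q0 by simp
qed

lemma dagger_monic:
  fixes h :: "'a::field poly"
  assumes h0: "coeff h 0 \<noteq> 0" and q0: "q > 0"
  shows "degree (dagger q h) = degree h \<and> lead_coeff (dagger q h) = 1"
proof -
  have d1: "degree (recip_poly h) = degree h"
    unfolding recip_poly_def using h0 by simp
  have l1: "lead_coeff (recip_poly h) = 1"
    unfolding recip_poly_def using h0 by (simp add: d1[unfolded recip_poly_def] coeff_reflect_poly)
  show ?thesis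
    unfolding dagger_def poly_conj_def using q0 d1 l1
    by (simp add: degree_map_poly coeff_map_poly)
qed

lemma MINPOLY:
  fixes P :: "'a::field poly"
  assumes P0: "P \<noteq> 0" and Py: "poly (M P) y = 0"
  shows "\<exists>g. lead_coeff g = 1 \<and> irreducible g \<and> g dvd P \<and> poly (M g) y = 0"
proof -
  have "\<exists>A. prod_mset A = smult (inverse (lead_coeff P)) P \<and> (\<forall>x\<in>#A. prime_elem x)"
    using field_poly_prod_mset_prime_factorization[OF P0] field_poly_in_prime_factorization_imp_prime
    by blast
  then obtain A where A: "prod_mset A = smult (inverse (lead_coeff P)) P" and Ap: "\<forall>x\<in>#A. prime_elem x"
    by blast
  then have "poly (M (prod_mset A)) y = 0" using Py by (simp add: M_smult)
  then have "(\<Prod>x\<in>#A. poly (M x) y) = 0" by (simp add: M_prod_mset poly_prod_mset)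
  then obtain x where xA: "x \<in># A" and xy: "poly (M x) y = 0"
    by (auto simp: prod_mset_zero_iff)
  have pr: "prime_elem x" using xA Ap by blast
  have "x dvd prod_mset A" using xA by (rule dvd_prod_mset)
  then have xd: "x dvd P" using A P0 by (simp add: dvd_smult_iff)
  have x0: "x \<noteq> 0" using pr by auto
  define g where "g = smult (inverse (lead_coeff x)) x"
  have "lead_coeff g = 1" unfolding g_def using x0 by simp
  moreover have "irreducible g" unfolding g_def using pr x0
    by (metis (mono_tags, opaque_lifting) dvd_refl is_unit_smult_iff
    not_irreducible_zero prime_elem_imp_irreducible prime_elem_mono
    prime_elem_not_unit smult_0_left smult_dvd inverse_eq_iff_eq inverse_zero leading_coeff_0_iff)
  moreover have "g dvd P" unfolding g_def using xd x0 by (simp add: smult_dvd)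
  moreover have "poly (M g) y = 0" unfolding g_def using xy by (simp add: M_smult)
  ultimately show ?thesis by blast
qed

lemma EQ:
  fixes g D :: "'a::field poly"
  assumes "lead_coeff g = 1" "lead_coeff D = 1" "degree D = degree g" "g dvd D"
  shows "g = D"
proof -
  obtain k where k: "D = g * k" using assms(4) by blast
  have "D \<noteq> 0" using assms(2) by auto
  then have "k \<noteq> 0" "g \<noteq> 0" using k by auto
  then have "degree k = 0" using k assms(3) by (simp add: degree_mult_eq)
  then obtain c where c: "k = [:c:]" by (metis degree_eq_zeroE)
  have "lead_coeff D = lead_coeff g * c" using k c by (simp add: lead_coeff_mult)
  then have "c = 1" using assms by simp
  then show ?thesis using k c by simp
qed

lemma EVX: "poly (M (monom 1 n - 1)) y = y^n - 1"
  by (simp add: M_diff M_monom poly_monom)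

lemma dvd_root:
  fixes f h :: "'a::field poly"
  assumes "f dvd h" "poly (M f) y = 0"
  shows "poly (M h) y = 0"
  using assms by (auto simp: M_mult)


lemma X_dvd: "monom (1::'a::field) a - 1 dvd monom 1 (a * b) - 1"
proof -
  have "monom (1::'a) (a*b) = (monom 1 a)^b" by (simp add: monom_power)
  then show ?thesis by (metis power_diff_1_eq dvd_triv_left)
qed

lemma SUB:
  fixes q n1 n2 :: nat and f :: "'a::{field,finite} poly"
  assumes cp: "prime CHAR('a)" and qk: "q = CHAR('a)^k"
    and n1: "n1 > 0" and n2: "n2 > 0"
    and cop: "coprime n1 n2"
    and h2: "Omega q n2 = {[:-1, 1:] :: 'a poly}"
    and fO: "f \<in> Omega q (n1 * n2)"
  shows "f \<in> Omega q n1"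
proof -
  have q0: "q > 0" using cp qk by (simp add: prime_gt_0_nat)
  have sf: "scrim q f" and fd: "f dvd monom 1 (n1*n2) - 1" using fO unfolding Omega_def by auto
  have irr: "irreducible f" and f0c: "coeff f 0 \<noteq> 0" and fdag: "f = dagger q f"
    using sf unfolding scrim_def by auto
  have "degree f \<noteq> 0"
    using irr by (metis is_unit_iff_degree irreducible_not_unit not_irreducible_zero)
  then obtain \<beta> where fb: "poly (M f) \<beta> = 0"
    using alg_closed_imp_poly_has_root[of "M f"] by (auto simp: degree_M)
  have bN: "\<beta>^(n1*n2) = 1"
    using dvd_root[OF fd fb] by (simp add: EVX)
  have b0: "\<beta> \<noteq> 0" using bN n1 n2 by (metis mult_pos_pos power_0_left zero_neq_one not_gr0)
  have s1: "poly (M f) ((inverse \<beta>)^q) = 0"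
    using DAG[OF cp qk f0c b0 fb] fdag by simp
  obtain x t where xt: "n1 * x = n2 * t + 1"
    using bezout_nat[of n1 n2] n1 cop by auto
  define e where "e = n1 * x"
  define \<beta>2 where "\<beta>2 = \<beta>^e"
  have b2n: "\<beta>2^n2 = 1"
  proof -
    have "\<beta>2^n2 = (\<beta>^(n1*n2))^x" unfolding \<beta>2_def e_def
      by (simp flip: power_mult add: ac_simps)
    then show ?thesis using bN by simp
  qed
  have P0: "monom (1::'a) n2 - 1 \<noteq> 0"
  proof
    assume "monom (1::'a) n2 - 1 = 0"
    then have "coeff (monom (1::'a) n2 - 1) n2 = 0" by simp
    then show False using n2 by simp
  qed
  obtain g where gm: "lead_coeff g = 1" and girr: "irreducible g"
    and gd: "g dvd monom 1 n2 - 1" and gb: "poly (M g) \<beta>2 = 0"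
    using MINPOLY[OF P0, of \<beta>2] b2n by (auto simp: EVX)
  have g0c: "coeff g 0 \<noteq> 0"
  proof
    assume "coeff g 0 = 0"
    then have "poly g 0 = 0" by (simp add: poly_0_coeff_0)
    then have "poly (monom (1::'a) n2 - 1) 0 = 0" using gd by (metis dvdE poly_mult mult_zero_left)
    then show False using n2 by (simp add: poly_monom power_0_left)
  qed
  have b20: "\<beta>2 \<noteq> 0" unfolding \<beta>2_def using b0 by simp
  have "f dvd pcompose g (monom 1 e)"
    by (rule MIN[OF irr fb]) (simp add: M_pcompose M_monom poly_pcompose poly_monom gb[unfolded \<beta>2_def])
  from dvd_root[OF this s1]
  have "poly (M g) (((inverse \<beta>)^q)^e) = 0"
    by (simp add: M_pcompose M_monom poly_pcompose poly_monom)
  moreover have "((inverse \<beta>)^q)^e = (inverse \<beta>2)^q"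
    unfolding \<beta>2_def by (simp add: power_inverse flip: power_mult add: mult.commute)
  ultimately have grho: "poly (M g) ((inverse \<beta>2)^q) = 0" by simp
  have Drho: "poly (M (dagger q g)) ((inverse \<beta>2)^q) = 0"
    by (rule DAG[OF cp qk g0c b20 gb])
  have "g dvd dagger q g" by (rule MIN[OF girr grho Drho])
  then have "g = dagger q g"
    using EQ[OF gm _ _] dagger_monic[OF g0c q0] by auto
  then have "scrim q g" unfolding scrim_def using gm girr g0c by auto
  then have "g \<in> Omega q n2" unfolding Omega_def using gd by auto
  then have "g = [:-1, 1:]" using h2 by auto
  then have "\<beta>2 = 1" using gb by (simp add: map_poly_pCons)
  then have be: "\<beta>^e = 1" unfolding \<beta>2_def .
  have "\<beta>^n1 = 1"
  proof -
    have "\<beta>^n1 = \<beta>^n1 * (\<beta>^(n1*n2))^t" using bN by simp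
    also have "\<dots> = \<beta>^(n1 * (n2 * t + 1))"
      by (simp flip: power_mult power_add add: algebra_simps)
    also have "\<dots> = (\<beta>^e)^n1" unfolding e_def xt[symmetric]
      by (simp flip: power_mult add: ac_simps)
    finally show ?thesis using be by simp
  qed
  then have "f dvd monom 1 n1 - 1"
    by (intro MIN[OF irr fb]) (simp add: EVX)
  then show ?thesis using sf unfolding Omega_def by auto
qed

theorem theorem2p11:
  fixes q n1 n2 :: nat
  assumes card: "card (UNIV :: 'a::{field,finite} set) = q ^ 2"
    and qpp: "\<exists>p k. prime p \<and> k > 0 \<and> q = p ^ k"
    and n1: "odd n1" "n1 > 0" and n2: "odd n2" "n2 > 0"
    and cop: "coprime n1 n2" "coprime n1 q" "coprime n2 q"
    and h1: "\<forall>f :: 'a poly. lead_coeff f = 1 \<and> irreducible f \<and> f dvd (monom 1 n1 - 1) \<longrightarrow> scrim q f"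
    and h2: "Omega q n2 = {[:-1, 1:] :: 'a poly}"
  shows "card (Omega q (n1 * n2) :: 'a poly set) = card (Omega q n1 :: 'a poly set)"
proof -
  obtain p k where pk: "prime p" "k > 0" "q = p ^ k" using qpp by blast
  have fin: "finite (UNIV :: 'a set)" by simp
  have c0: "CHAR('a) > 0" using finite_imp_CHAR_pos[OF fin] by simp
  have cp: "prime CHAR('a)" using prime_CHAR_semidom[OF c0] .
  have "CHAR('a) dvd p ^ (k * 2)" using CHAR_dvd_CARD[where 'a='a] card pk
    by (simp add: power_mult)
  then have "CHAR('a) dvd p" using cp by (metis prime_dvd_power)
  then have "CHAR('a) = p" using cp pk by (metis primes_dvd_imp_eq)
  then have qk: "q = CHAR('a)^k" using pk by simp
  have "Omega q (n1 * n2) = (Omega q n1 :: 'a poly set)"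
  proof
    show "Omega q (n1 * n2) \<subseteq> (Omega q n1 :: 'a poly set)"
      using SUB[OF cp qk n1(2) n2(2) cop(1) h2] by blast
    show "Omega q n1 \<subseteq> (Omega q (n1 * n2) :: 'a poly set)"
      unfolding Omega_def using X_dvd[of n1 n2] dvd_trans by blast
  qed
  then show ?thesis by simp
qed

end
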